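(* Let $T$ be a non-star tree containing an edge $xy$ with $d_T(x)=1$ and $d_T(y)\ge 3$. Suppose that for every neighbor $y'\ne x$ of $y$, the tree $T_{(y',y)}$ is a neighbor $F$-tree of $y$ which is not a single vertex (i.e. not isomorphic to $P_1$). Then there exists a $(T,x)$-good 2-placement.
   Context: All graphs are finite, simple and undirected; $P_k$ is the path on $k$ vertices. A non-star tree is a tree not isomorphic to a star $K_{1,m}$ for any $m\ge0$. For an edge $ab$ of a tree $T$, $T_{(a,b)}$ denotes the connected component containing $a$ in $T-\{ab\}$; it is a neighbor $F$-tree of $b$ if it is a path with at most $3$ vertices and, when it has exactly $3$ vertices, $a$ is an end vertex of it. A permutation $\sigma$ of $V(T)$ is a 2-placement of $T$ if $\sigma(a)\sigma(b)\notin E(T)$ for every edge $ab\in E(T)$; $\sigma(T)\subseteq T^k$ means $dist_T(\sigma(a),\sigma(b))\le k$ for every edge $ab$ of $T$. A fixed-point-free permutation $\sigma$ of $V(T)$ is a $(T,x)$-good 2-placement if (distances and degrees in $T$): (1) $\sigma$ is a 2-placement of $T$; (2) $\sigma(T)\subseteq T^5$; (3) $dist(x,\sigma(x))=1$; (4) $dist(w,\sigma(w))\le 2$ for every neighbor $w$ of $x$; (5) $dist(w,\sigma(w))\le 4$ for every $w$ of degree $1$. *)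

theory Defs
  imports Main
begin

definition simple_graph :: "'a set \<Rightarrow> ('a \<Rightarrow> 'a \<Rightarrow> bool) \<Rightarrow> bool" where
  "simple_graph V E \<longleftrightarrow> finite V \<and> (\<forall>u v. E u v \<longrightarrow> u \<in> V \<and> v \<in> V)
     \<and> (\<forall>u v. E u v \<longrightarrow> E v u) \<and> (\<forall>u. \<not> E u u)"

definition walk :: "('a \<Rightarrow> 'a \<Rightarrow> bool) \<Rightarrow> 'a list \<Rightarrow> bool" where
  "walk E xs \<longleftrightarrow> xs \<noteq> [] \<and> (\<forall>i. Suc i < length xs \<longrightarrow> E (xs ! i) (xs ! Suc i))"

definition connected_graph :: "'a set \<Rightarrow> ('a \<Rightarrow> 'a \<Rightarrow> bool) \<Rightarrow> bool" where
  "connected_graph V E \<longleftrightarrow> V \<noteq> {} \<and>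
     (\<forall>u\<in>V. \<forall>v\<in>V. \<exists>xs. walk E xs \<and> hd xs = u \<and> last xs = v)"

definition has_cycle :: "('a \<Rightarrow> 'a \<Rightarrow> bool) \<Rightarrow> bool" where
  "has_cycle E \<longleftrightarrow> (\<exists>vs. 3 \<le> length vs \<and> distinct vs \<and> walk E vs \<and> E (last vs) (hd vs))"

definition is_tree :: "'a set \<Rightarrow> ('a \<Rightarrow> 'a \<Rightarrow> bool) \<Rightarrow> bool" where
  "is_tree V E \<longleftrightarrow> simple_graph V E \<and> connected_graph V E \<and> \<not> has_cycle E"

definition degree :: "'a set \<Rightarrow> ('a \<Rightarrow> 'a \<Rightarrow> bool) \<Rightarrow> 'a \<Rightarrow> nat" where
  "degree V E v = card {w \<in> V. E v w}"

definition gdist :: "('a \<Rightarrow> 'a \<Rightarrow> bool) \<Rightarrow> 'a \<Rightarrow> 'a \<Rightarrow> nat" where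
  "gdist E u v = (LEAST n. \<exists>xs. walk E xs \<and> hd xs = u \<and> last xs = v \<and> length xs = Suc n)"

definition is_star :: "'a set \<Rightarrow> ('a \<Rightarrow> 'a \<Rightarrow> bool) \<Rightarrow> bool" where
  "is_star V E \<longleftrightarrow> (\<exists>c\<in>V. (\<forall>v\<in>V. v \<noteq> c \<longrightarrow> E c v) \<and> (\<forall>u v. E u v \<longrightarrow> u = c \<or> v = c))"

definition del_edge :: "('a \<Rightarrow> 'a \<Rightarrow> bool) \<Rightarrow> 'a \<Rightarrow> 'a \<Rightarrow> 'a \<Rightarrow> 'a \<Rightarrow> bool" where
  "del_edge E a b = (\<lambda>u v. E u v \<and> {u, v} \<noteq> {a, b})"

text \<open>Vertex set of T_(a,b): component containing a in T - {ab}.\<close>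
definition branch :: "('a \<Rightarrow> 'a \<Rightarrow> bool) \<Rightarrow> 'a \<Rightarrow> 'a \<Rightarrow> 'a set" where
  "branch E a b = {v. \<exists>xs. walk (del_edge E a b) xs \<and> hd xs = a \<and> last xs = v}"

definition path_seq :: "'a set \<Rightarrow> ('a \<Rightarrow> 'a \<Rightarrow> bool) \<Rightarrow> 'a list \<Rightarrow> bool" where
  "path_seq C E vs \<longleftrightarrow> vs \<noteq> [] \<and> distinct vs \<and> set vs = C \<and>
     (\<forall>u\<in>C. \<forall>v\<in>C. E u v \<longleftrightarrow> (\<exists>i. Suc i < length vs \<and> {vs ! i, vs ! Suc i} = {u, v}))"

definition neighbor_F_tree :: "('a \<Rightarrow> 'a \<Rightarrow> bool) \<Rightarrow> 'a \<Rightarrow> 'a \<Rightarrow> bool" where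
  "neighbor_F_tree E a b \<longleftrightarrow>
     (\<exists>vs. path_seq (branch E a b) (del_edge E a b) vs \<and> length vs \<le> 3 \<and>
        (length vs = 3 \<longrightarrow> a = hd vs \<or> a = last vs))"

definition good_2_placement :: "'a set \<Rightarrow> ('a \<Rightarrow> 'a \<Rightarrow> bool) \<Rightarrow> 'a \<Rightarrow> ('a \<Rightarrow> 'a) \<Rightarrow> bool" where
  "good_2_placement V E x \<sigma> \<longleftrightarrow>
     bij_betw \<sigma> V V \<and> (\<forall>v\<in>V. \<sigma> v \<noteq> v) \<and>
     (\<forall>a b. E a b \<longrightarrow> \<not> E (\<sigma> a) (\<sigma> b)) \<and>
     (\<forall>a b. E a b \<longrightarrow> gdist E (\<sigma> a) (\<sigma> b) \<le> 5) \<and>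
     gdist E x (\<sigma> x) = 1 \<and>
     (\<forall>w\<in>V. E x w \<longrightarrow> gdist E w (\<sigma> w) \<le> 2) \<and>
     (\<forall>w\<in>V. degree V E w = 1 \<longrightarrow> gdist E w (\<sigma> w) \<le> 4)"

end

theory Submission
  imports Defs
begin


lemma walk_single[simp]: "walk E [u]"
  by (simp add: walk_def)

lemma walk_Cons_Cons[simp]: "walk E (u # v # xs) \<longleftrightarrow> E u v \<and> walk E (v # xs)"
proof -
  have "(\<forall>i. Suc i < length (u # v # xs) \<longrightarrow> E ((u # v # xs) ! i) ((u # v # xs) ! Suc i))
     \<longleftrightarrow> E u v \<and> (\<forall>i. Suc i < length (v # xs) \<longrightarrow> E ((v # xs) ! i) ((v # xs) ! Suc i))"
    (is "(\<forall>i. ?P i) \<longleftrightarrow> _")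
  proof
    assume h: "\<forall>i. ?P i"
    have "E u v" using h[rule_format, of 0] by simp
    moreover have "Suc i < length (v # xs) \<longrightarrow> E ((v # xs) ! i) ((v # xs) ! Suc i)" for i
      using h[rule_format, of "Suc i"] by simp
    ultimately show "E u v \<and> (\<forall>i. Suc i < length (v # xs) \<longrightarrow> E ((v # xs) ! i) ((v # xs) ! Suc i))" by blast
  next
    assume h: "E u v \<and> (\<forall>i. Suc i < length (v # xs) \<longrightarrow> E ((v # xs) ! i) ((v # xs) ! Suc i))"
    show "\<forall>i. ?P i"
    proof
      fix i show "?P i" using h by (cases i) auto
    qed
  qed
  then show ?thesis unfolding walk_def by simp
qed

lemma walk_snoc: "xs \<noteq> [] \<Longrightarrow> walk E (xs @ [w]) \<longleftrightarrow> walk E xs \<and> E (last xs) w"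
proof (induction xs rule: induct_list012)
  case (3 u v xs)
  then show ?case by simp
qed simp_all

lemma walk_take: "walk E xs \<Longrightarrow> 0 < n \<Longrightarrow> walk E (take n xs)"
  unfolding walk_def by auto

lemma walk_rev: assumes sym: "\<And>u v. E u v \<Longrightarrow> E v u" shows "walk E xs \<Longrightarrow> walk E (rev xs)"
proof (induction xs rule: induct_list012)
  case (3 u v xs)
  then have "walk E (rev (v # xs))" "E v u" using sym by auto
  then show ?case using walk_snoc[of "rev (v#xs)" E u] by (simp add: last_rev)
qed simp_all

lemma enter: "xs \<noteq> [] \<Longrightarrow> hd xs \<notin> S \<Longrightarrow> last xs \<in> S \<Longrightarrow>
   \<exists>i. Suc i < length xs \<and> xs ! i \<notin> S \<and> xs ! Suc i \<in> S"
proof (induction xs)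
  case (Cons u xs)
  show ?case
  proof (cases xs)
    case Nil then show ?thesis using Cons by simp
  next
    case (Cons v ys)
    show ?thesis
    proof (cases "v \<in> S")
      case True then show ?thesis using Cons \<open>hd (u # xs) \<notin> S\<close> by (intro exI[of _ 0]) simp
    next
      case False
      then obtain i where "Suc i < length xs" "xs ! i \<notin> S" "xs ! Suc i \<in> S"
        using Cons.IH Cons Cons.prems by auto
      then show ?thesis by (intro exI[of _ "Suc i"]) simp
    qed
  qed
qed simp

lemma gdist_le: "walk E xs \<Longrightarrow> hd xs = u \<Longrightarrow> last xs = v \<Longrightarrow> gdist E u v \<le> length xs - 1"
  unfolding gdist_def
  by (rule Least_le) (metis Suc_diff_1 length_greater_0_conv walk_def)

lemma gdist_1: "E u v \<Longrightarrow> u \<noteq> v \<Longrightarrow> gdist E u v = 1"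
  unfolding gdist_def
proof (rule Least_equality)
  assume "E u v" "u \<noteq> v"
  show "\<exists>xs. walk E xs \<and> hd xs = u \<and> last xs = v \<and> length xs = Suc 1"
    using \<open>E u v\<close> by (intro exI[of _ "[u,v]"]) simp
next
  fix n assume "u \<noteq> v" "\<exists>xs. walk E xs \<and> hd xs = u \<and> last xs = v \<and> length xs = Suc n"
  then show "1 \<le> n" by (cases n) (auto simp: length_Suc_conv)
qed



lemma exists_G:
  assumes "finite A" "A \<noteq> {}" "x \<notin> A" "y \<notin> A"
  shows "\<exists>G. (\<forall>u\<in>insert y A. G u \<in> insert x A) \<and> inj_on G (insert y A) \<and> (\<forall>a\<in>A. G a \<noteq> a) \<and> G y \<in> A"
proof -
  obtain ns where ns: "distinct ns" "set ns = A" using finite_distinct_list[OF assms(1)] by auto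
  define xs where "xs = y # ns"
  define ys where "ys = ns @ [x]"
  define G where "G u = the (map_of (zip xs ys) u)" for u
  have dxs: "distinct xs" using ns assms unfolding xs_def by auto
  have dys: "distinct ys" using ns assms unfolding ys_def by auto
  have len: "length xs = length ys" unfolding xs_def ys_def by simp
  have Gn: "G (xs ! i) = ys ! i" if "i < length xs" for i
    unfolding G_def using map_of_zip_nth[OF len dxs] that len by simp
  have sx: "set xs = insert y A" "set ys = insert x A" using ns unfolding xs_def ys_def by auto
  have nne: "ns \<noteq> []" using ns assms by auto
  show ?thesis
  proof (intro exI[of _ G] conjI ballI)
    fix u assume "u \<in> insert y A"
    then obtain i where "i < length xs" "u = xs ! i" using sx by (metis in_set_conv_nth)
    then show "G u \<in> insert x A" using Gn sx len by (metis nth_mem)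
  next
    show "inj_on G (insert y A)"
    proof (rule inj_onI)
      fix u v assume "u \<in> insert y A" "v \<in> insert y A" "G u = G v"
      then obtain i j where "i < length xs" "u = xs ! i" "j < length xs" "v = xs ! j"
        using sx by (metis in_set_conv_nth)
      then show "u = v" using Gn \<open>G u = G v\<close> dys len nth_eq_iff_index_eq by metis
    qed
  next
    fix a assume "a \<in> A"
    then obtain j where j: "j < length ns" "a = ns ! j" using ns by (metis in_set_conv_nth)
    have "a = xs ! Suc j" using j unfolding xs_def by simp
    then have "G a = ys ! Suc j" using Gn[of "Suc j"] j unfolding xs_def by simp
    moreover have "a = ys ! j" using j unfolding ys_def by (simp add: nth_append)
    moreover have "Suc j < length ys" using j unfolding ys_def by simp
    ultimately show "G a \<noteq> a" using dys nth_eq_iff_index_eq j by (metis Suc_lessD n_not_Suc_n)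
  next
    have "G y = ys ! 0" using Gn[of 0] unfolding xs_def by simp
    then show "G y \<in> A" using nne ns unfolding ys_def by (auto simp: nth_append)
  qed
qed


lemma gdist_both: assumes sym: "\<And>u v. E u v \<Longrightarrow> E v u"
  and w: "walk E xs" and l: "length xs \<le> Suc n"
  shows "gdist E (hd xs) (last xs) \<le> n \<and> gdist E (last xs) (hd xs) \<le> n"
proof -
  have ne: "xs \<noteq> []" using w by (simp add: walk_def)
  have "gdist E (hd xs) (last xs) \<le> length xs - 1" using gdist_le[OF w] by simp
  moreover have "gdist E (last xs) (hd xs) \<le> length xs - 1"
    using gdist_le[OF walk_rev[OF sym w]] ne by (simp add: hd_rev last_rev)
  ultimately show ?thesis using l by linarith
qed

lemma spider_good:
  fixes V :: "'a set" and E :: "'a \<Rightarrow> 'a \<Rightarrow> bool" and x y :: 'a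
    and A :: "'a set" and b c :: "'a \<Rightarrow> 'a" and Br :: "'a \<Rightarrow> 'a set" and long :: "'a \<Rightarrow> bool"
  assumes symE: "\<And>u v. E u v \<Longrightarrow> E v u"
    and irr: "\<And>u. \<not> E u u"
    and inV: "\<And>u v. E u v \<Longrightarrow> u \<in> V"
    and fin: "finite V"
    and Ex: "\<And>w. E x w \<longleftrightarrow> w = y"
    and Ey: "\<And>w. E y w \<longleftrightarrow> w = x \<or> w \<in> A"
    and Ane: "A \<noteq> {}" and finA: "finite A" and xA: "x \<notin> A" and yA: "y \<notin> A" and xy: "x \<noteq> y"
    and cover: "\<And>v. v \<in> V \<Longrightarrow> v = x \<or> v = y \<or> (\<exists>a\<in>A. v \<in> Br a)"
    and Brd: "\<And>a. a \<in> A \<Longrightarrow> Br a = {a, b a, c a}"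
    and xBr: "\<And>a. a \<in> A \<Longrightarrow> x \<notin> Br a"
    and yBr: "\<And>a. a \<in> A \<Longrightarrow> y \<notin> Br a"
    and disj: "\<And>a a' v. a \<in> A \<Longrightarrow> a' \<in> A \<Longrightarrow> v \<in> Br a \<Longrightarrow> v \<in> Br a' \<Longrightarrow> a = a'"
    and st1: "\<And>a. a \<in> A \<Longrightarrow> a \<noteq> b a \<and> E a (b a)"
    and stL: "\<And>a. a \<in> A \<Longrightarrow> long a \<Longrightarrow> a \<noteq> c a \<and> b a \<noteq> c a \<and> E (b a) (c a) \<and> \<not> E a (c a)"
    and stS: "\<And>a. a \<in> A \<Longrightarrow> \<not> long a \<Longrightarrow> c a = b a"
    and Ebr: "\<And>a u v. a \<in> A \<Longrightarrow> u \<in> Br a \<Longrightarrow> E u v \<Longrightarrow> v \<in> Br a \<or> (u = a \<and> v = y)"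
  shows "\<exists>\<sigma>. good_2_placement V E x \<sigma>"
proof -
  have Exy: "E x y" "E y x" using Ex[of y] symE[of x y] by auto
  have Eya: "E y a" "E a y" if "a \<in> A" for a using Ey[of a] that symE[of y a] by auto
  have Eab: "E a (b a)" "E (b a) a" if "a \<in> A" for a using st1[OF that] symE[of a "b a"] by auto
  have Ebc: "E (b a) (c a)" "E (c a) (b a)" if "a \<in> A" "long a" for a using stL[OF that] symE[of "b a" "c a"] by auto
  have mem: "a \<in> Br a" "b a \<in> Br a" "c a \<in> Br a" if "a \<in> A" for a using Brd that by auto
  have xV: "x \<in> V" "y \<in> V" using inV[OF Exy(1)] inV[OF Exy(2)] by auto
  have aV: "a \<in> V" "b a \<in> V" "c a \<in> V" if "a \<in> A" for a
  proof -
    show "a \<in> V" using inV[OF Eya(2)[OF that]] .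
    show "b a \<in> V" using inV[OF Eab(2)[OF that]] .
    show "c a \<in> V" proof (cases "long a") case True then show ?thesis using inV[OF Ebc(2)[OF that True]] by blast next case False then show ?thesis using stS[OF that] \<open>b a \<in> V\<close> by simp qed
  qed
  define own where "own v = (THE a. a \<in> A \<and> v \<in> Br a)" for v
  have own: "own v = a" if "a \<in> A" "v \<in> Br a" for a v
    unfolding own_def using that disj by (intro the_equality) auto
  have nadj: "\<not> E u v" if "a \<in> A" "a' \<in> A" "a \<noteq> a'" "u \<in> Br a" "v \<in> Br a'" for a a' u v
    using Ebr[OF that(1,4)] disj[OF that(1,2)] that(3-5) yBr[OF that(2)] by blast
  have bA: "b a \<notin> A" if "a \<in> A" for a using disj[OF that _ mem(2)[OF that] mem(1)] st1[OF that] by blast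
  have nEx: "\<not> E x w" "\<not> E w x" if "w \<noteq> y" for w using Ex[of w] symE[of w x] that by blast+
  obtain G where G1: "\<And>u. u \<in> insert y A \<Longrightarrow> G u \<in> insert x A" and G2: "inj_on G (insert y A)"
    and G3: "\<And>a. a \<in> A \<Longrightarrow> G a \<noteq> a" and G4: "G y \<in> A"
    using exists_G[OF finA Ane xA yA] by blast
  define bx where "bx w = (if w = x then x else b w)" for w
  define \<sigma> where "\<sigma> v = (if v = x then y else if v = y then bx (G y) else
     (let a = own v in if v = a then bx (G a) else if v = b a then (if long a then c a else a) else a))" for v
  have s_x: "\<sigma> x = y" unfolding \<sigma>_def by simp
  have s_ya: "\<sigma> u = bx (G u)" if "u \<in> insert y A" for u
  proof (cases "u = y")
    case True then show ?thesis using xy unfolding \<sigma>_def by simp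
  next
    case False then have "u \<in> A" using that by simp
    then show ?thesis using own[OF \<open>u \<in> A\<close> mem(1)] xA False unfolding \<sigma>_def by (auto simp: Let_def)
  qed
  have s_b: "\<sigma> (b a) = (if long a then c a else a)" if "a \<in> A" for a
  proof -
    have "b a \<noteq> x" "b a \<noteq> y" using mem[OF that] xBr[OF that] yBr[OF that] by auto
    then show ?thesis using own[OF that mem(2)[OF that]] st1[OF that] unfolding \<sigma>_def by (auto simp: Let_def)
  qed
  have s_c: "\<sigma> (c a) = a" if "a \<in> A" "long a" for a
  proof -
    have "c a \<noteq> x" "c a \<noteq> y" using mem[OF that(1)] xBr[OF that(1)] yBr[OF that(1)] by auto
    then show ?thesis using own[OF that(1) mem(3)[OF that(1)]] stL[OF that] unfolding \<sigma>_def by (auto simp: Let_def)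
  qed
  have vcls: "v = x \<or> v = y \<or> (\<exists>a\<in>A. v = a \<or> v = b a \<or> (long a \<and> v = c a))" if "v \<in> V" for v
  proof -
    have "v = x \<or> v = y \<or> (\<exists>a\<in>A. v \<in> Br a)" using cover[OF that] .
    then show ?thesis
    proof (elim disjE bexE)
      fix a assume a: "a \<in> A" "v \<in> Br a"
      then have "v = a \<or> v = b a \<or> v = c a" using Brd[OF a(1)] by auto
      then show ?thesis using stS[OF a(1)] a(1) by (cases "long a") auto
    qed simp_all
  qed
  have vcases: "P" if "v \<in> V" "v = x \<Longrightarrow> P" "v = y \<Longrightarrow> P"
    "\<And>a. a \<in> A \<Longrightarrow> v = a \<or> v = b a \<or> long a \<and> v = c a \<Longrightarrow> P" for v P
    using vcls[OF that(1)] that(2-4) by blast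
  define Ginv where "Ginv = inv_into (insert y A) G"
  define \<tau> where "\<tau> w = (if w = y then x else if w = x then Ginv x else
     (let a = own w in if w = a then (if long a then c a else b a) else if w = b a then Ginv a else b a))" for w
  have t_y: "\<tau> y = x" unfolding \<tau>_def by simp
  have t_x: "\<tau> x = Ginv x" unfolding \<tau>_def using xy by simp
  have t_a: "\<tau> a = (if long a then c a else b a)" if "a \<in> A" for a
    using own[OF that mem(1)[OF that]] that xA yA unfolding \<tau>_def by (auto simp: Let_def)
  have t_b: "\<tau> (b a) = Ginv a" if "a \<in> A" for a
  proof -
    have "b a \<noteq> x" "b a \<noteq> y" using mem[OF that] xBr[OF that] yBr[OF that] by auto
    then show ?thesis using own[OF that mem(2)[OF that]] st1[OF that] unfolding \<tau>_def by (auto simp: Let_def)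
  qed
  have t_c: "\<tau> (c a) = b a" if "a \<in> A" "long a" for a
  proof -
    have "c a \<noteq> x" "c a \<noteq> y" using mem[OF that(1)] xBr[OF that(1)] yBr[OF that(1)] by auto
    then show ?thesis using own[OF that(1) mem(3)[OF that(1)]] stL[OF that] unfolding \<tau>_def by (auto simp: Let_def)
  qed
  have s_yA: "\<sigma> u = (if G u = x then x else b (G u))" "G u = x \<or> G u \<in> A" if "u \<in> insert y A" for u
    using s_ya[OF that] G1[OF that] unfolding bx_def by auto
  have tau: "\<tau> (\<sigma> v) = v" if "v \<in> V" for v
  proof -
    have c1: "\<tau> (\<sigma> u) = u" if u: "u \<in> insert y A" for u
    proof (cases "G u = x")
      case True then show ?thesis using s_yA[OF u] t_x inv_into_f_f[OF G2 u] unfolding Ginv_def by simp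
    next
      case False then have "G u \<in> A" using s_yA(2)[OF u] by simp
      then show ?thesis using False s_yA[OF u] t_b inv_into_f_f[OF G2 u] unfolding Ginv_def by simp
    qed
    show ?thesis
    proof (rule vcases[OF that])
      assume "v = x" then show ?thesis using s_x t_y by simp
    next
      assume "v = y" then show ?thesis using c1 by simp
    next
      fix a assume a: "a \<in> A" "v = a \<or> v = b a \<or> long a \<and> v = c a"
      then show ?thesis using c1 s_b t_a t_c s_c by (cases "long a") auto
    qed
  qed
  have sV: "\<sigma> v \<in> V" if "v \<in> V" for v
  proof -
    have c1: "\<sigma> u \<in> V" if u: "u \<in> insert y A" for u
      using s_yA[OF u] aV xV by (cases "G u = x") auto
    show ?thesis
    proof (rule vcases[OF that])
      assume "v = x" then show ?thesis using s_x xV by simp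
    next
      assume "v = y" then show ?thesis using c1 by simp
    next
      fix a assume a: "a \<in> A" "v = a \<or> v = b a \<or> long a \<and> v = c a"
      then show ?thesis using c1 s_b s_c aV by (cases "long a") auto
    qed
  qed
  have injs: "inj_on \<sigma> V" by (rule inj_on_inverseI[where g = \<tau>]) (rule tau)
  have bij: "bij_betw \<sigma> V V" unfolding bij_betw_def using injs endo_inj_surj[OF fin _ injs] sV by blast
  have fpf: "\<sigma> v \<noteq> v" if "v \<in> V" for v
  proof -
    have c1: "\<sigma> u \<noteq> u" if u: "u \<in> insert y A" for u
    proof (cases "G u = x")
      case True then show ?thesis using s_yA[OF u] u xy xA by auto
    next
      case False then have g: "G u \<in> A" using s_yA(2)[OF u] by simp
      have "b (G u) \<noteq> u"
      proof
        assume h: "b (G u) = u"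
        show False
        proof (cases "u = y")
          case True then show False using h yBr[OF g] mem(2)[OF g] by simp
        next
          case False then have uA: "u \<in> A" using u by simp
          then show False using disj[OF g uA, of u] h mem(2)[OF g] mem(1)[OF uA] G3[OF uA] by simp
        qed
      qed
      then show ?thesis using False s_yA[OF u] by simp
    qed
    show ?thesis
    proof (rule vcases[OF that])
      assume "v = x" then show ?thesis using s_x xy by simp
    next
      assume "v = y" then show ?thesis using c1 by simp
    next
      fix a assume a: "a \<in> A" "v = a \<or> v = b a \<or> long a \<and> v = c a"
      then show ?thesis using c1 s_b s_c st1[OF a(1)] stL[OF a(1)] by (cases "long a") auto
    qed
  qed
  have gw: "gdist E p q \<le> n \<and> gdist E q p \<le> n"
    if "walk E xs" "length xs \<le> Suc n" "hd xs = p" "last xs = q" for xs n p q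
    using gdist_both[OF symE that(1,2)] that(3,4) by simp
  define EP where "EP u v \<longleftrightarrow> \<not> E (\<sigma> u) (\<sigma> v) \<and> \<not> E (\<sigma> v) (\<sigma> u) \<and>
      gdist E (\<sigma> u) (\<sigma> v) \<le> 5 \<and> gdist E (\<sigma> v) (\<sigma> u) \<le> 5" for u v
  have EPsym: "EP u v \<Longrightarrow> EP v u" for u v unfolding EP_def by blast
  have g0: "G y \<in> A" "\<sigma> y = b (G y)" using G4 s_yA[of y] xA by auto
  have nEyb: "\<not> E y (b g)" "\<not> E (b g) y" if "g \<in> A" for g
  proof -
    show "\<not> E y (b g)" using Ey[of "b g"] bA[OF that] mem(2)[OF that] xBr[OF that] by auto
    then show "\<not> E (b g) y" using symE by blast
  qed
  have EP1: "EP x y"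
  proof -
    have "walk E [y, G y, b (G y)]" using Eya(1)[OF g0(1)] Eab(1)[OF g0(1)] by simp
    then have "gdist E y (b (G y)) \<le> 2 \<and> gdist E (b (G y)) y \<le> 2" using gw[of "[y, G y, b (G y)]" 2] by simp
    then show ?thesis unfolding EP_def using s_x g0 nEyb[OF g0(1)] by simp
  qed
  have EP2: "EP y a" if a: "a \<in> A" for a
  proof -
    have ne: "G a \<noteq> G y" using G2 a yA unfolding inj_on_def by blast
    show ?thesis
    proof (cases "G a = x")
      case True
      have "walk E [b (G y), G y, y, x]" using Eya(2)[OF g0(1)] Eab(2)[OF g0(1)] Exy by simp
      then have "gdist E (b (G y)) x \<le> 3 \<and> gdist E x (b (G y)) \<le> 3" using gw[of "[b (G y), G y, y, x]" 3] by simp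
      moreover have "b (G y) \<noteq> y" using mem(2)[OF g0(1)] yBr[OF g0(1)] by auto
      ultimately show ?thesis unfolding EP_def using True s_yA[of a] a g0 nEx[of "b (G y)"] by simp
    next
      case False
      then have g1: "G a \<in> A" using s_yA(2)[of a] a by simp
      have "walk E [b (G y), G y, y, G a, b (G a)]" using Eya[OF g0(1)] Eab[OF g0(1)] Eya[OF g1] Eab[OF g1] by simp
      then have "gdist E (b (G y)) (b (G a)) \<le> 4 \<and> gdist E (b (G a)) (b (G y)) \<le> 4"
        using gw[of "[b (G y), G y, y, G a, b (G a)]" 4] by simp
      moreover have "\<not> E (b (G y)) (b (G a))" "\<not> E (b (G a)) (b (G y))"
        using nadj[OF g0(1) g1 ne[symmetric] mem(2)[OF g0(1)] mem(2)[OF g1]]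
          nadj[OF g1 g0(1) ne mem(2)[OF g1] mem(2)[OF g0(1)]] by auto
      ultimately show ?thesis unfolding EP_def using False s_yA[of a] a g0 by simp
    qed
  qed
  have EP3: "EP a (b a)" if a: "a \<in> A" for a
  proof -
    define w where "w = (if long a then c a else a)"
    have w: "\<sigma> (b a) = w" "w \<in> Br a" using s_b[OF a] mem[OF a] unfolding w_def by auto
    have wy: "w \<noteq> y" using w(2) yBr[OF a] by auto
    have ww: "walk E (y # a # [b a, c a]) \<and> length [b a, c a] \<le> 2 \<and> last (a # [b a, c a]) = w \<or>
              walk E (y # a # []) \<and> last (a # []) = w"
      using Eya[OF a] Eab[OF a] Ebc[OF a] unfolding w_def by (cases "long a") auto
    have Ga: "G a \<noteq> a" using G3[OF a] .
    show ?thesis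
    proof (cases "G a = x")
      case True
      have "walk E ([x, y, a, b a, c a]) \<and> last [x, y, a, b a, c a] = w \<or> walk E [x, y, a] \<and> last [x,y,a] = w"
        using Eya[OF a] Eab[OF a] Ebc[OF a] Exy unfolding w_def by (cases "long a") auto
      then have "gdist E x w \<le> 5 \<and> gdist E w x \<le> 5"
        using gw[of "[x, y, a, b a, c a]" 5 x w] gw[of "[x, y, a]" 5 x w] by auto
      then show ?thesis unfolding EP_def using True s_yA[of a] a w nEx[OF wy] by simp
    next
      case False
      then have g1: "G a \<in> A" using s_yA(2)[of a] a by simp
      have "walk E ([b (G a), G a, y, a, b a, c a]) \<and> last [b (G a), G a, y, a, b a, c a] = w
          \<or> walk E [b (G a), G a, y, a] \<and> last [b (G a), G a, y, a] = w"
        using Eya[OF a] Eab[OF a] Ebc[OF a] Eya[OF g1] Eab[OF g1] unfolding w_def by (cases "long a") auto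
      then have "gdist E (b (G a)) w \<le> 5 \<and> gdist E w (b (G a)) \<le> 5"
        using gw[of "[b (G a), G a, y, a, b a, c a]" 5 "b (G a)" w] gw[of "[b (G a), G a, y, a]" 5 "b (G a)" w] by auto
      moreover have "\<not> E (b (G a)) w" "\<not> E w (b (G a))"
        using nadj[OF g1 a Ga mem(2)[OF g1] w(2)] nadj[OF a g1 Ga[symmetric] w(2) mem(2)[OF g1]] by auto
      ultimately show ?thesis unfolding EP_def using False s_yA[of a] a w by simp
    qed
  qed
  have EP4: "EP (b a) (c a)" if a: "a \<in> A" "long a" for a
  proof -
    have "walk E [c a, b a, a]" using Ebc[OF a] Eab[OF a(1)] by simp
    then have "gdist E (c a) a \<le> 2 \<and> gdist E a (c a) \<le> 2" using gw[of "[c a, b a, a]" 2] by simp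
    moreover have "\<not> E a (c a)" "\<not> E (c a) a" using stL[OF a] symE[of "c a" a] by auto
    ultimately show ?thesis unfolding EP_def using s_b[OF a(1)] s_c[OF a] a by simp
  qed
  have EPall: "EP u v" if e: "E u v" for u v
  proof -
    have "u \<in> V" using inV[OF e] .
    then show ?thesis using vcls
    proof -
      consider "u = x" | "u = y" | a where "a \<in> A" "u = a" | a where "a \<in> A" "u = b a"
        | a where "a \<in> A" "long a" "u = c a" using vcls[OF \<open>u \<in> V\<close>] by blast
      then show ?thesis
      proof cases
        case 1 then show ?thesis using e Ex EP1 by simp
      next
        case 2 then have "v = x \<or> v \<in> A" using e Ey by simp
        then show ?thesis using 2 EPsym[OF EP1] EP2 by blast
      next
        case (3 a)
        have "v \<in> Br a \<or> v = y" using Ebr[OF 3(1) mem(1)[OF 3(1)], of v] e 3 by simp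
        then have "v = a \<or> v = b a \<or> v = c a \<or> v = y" using Brd[OF 3(1)] by simp
        then show ?thesis
        proof (elim disjE)
          assume "v = a" then show ?thesis using 3 e irr by simp
        next
          assume "v = b a" then show ?thesis using 3 EP3 by simp
        next
          assume v: "v = c a"
          show ?thesis
          proof (cases "long a")
            case True then show ?thesis using stL[OF 3(1)] v 3 e by simp
          next
            case False then show ?thesis using stS[OF 3(1)] v 3 EP3 by simp
          qed
        next
          assume "v = y" then show ?thesis using 3 EPsym[OF EP2[OF 3(1)]] by simp
        qed
      next
        case (4 a)
        have "v \<in> Br a" using Ebr[OF 4(1) mem(2)[OF 4(1)], of v] e 4 st1[OF 4(1)] by (cases "b a = a") simp_all
        then have "v = a \<or> v = b a \<or> v = c a" using Brd[OF 4(1)] by simp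
        then show ?thesis
        proof (elim disjE)
          assume "v = a" then show ?thesis using 4 EPsym[OF EP3[OF 4(1)]] by simp
        next
          assume "v = b a" then show ?thesis using 4 e irr by simp
        next
          assume v: "v = c a"
          show ?thesis
          proof (cases "long a")
            case True then show ?thesis using EP4[OF 4(1) True] v 4 by simp
          next
            case False then show ?thesis using stS[OF 4(1)] v 4 e irr by simp
          qed
        qed
      next
        case (5 a)
        have "v \<in> Br a" using Ebr[OF 5(1) mem(3)[OF 5(1)], of v] e 5 stL[OF 5(1,2)] by (cases "c a = a") simp_all
        then have "v = a \<or> v = b a \<or> v = c a" using Brd[OF 5(1)] by simp
        then show ?thesis
        proof (elim disjE)
          assume "v = a" then show ?thesis using 5 e stL[OF 5(1,2)] symE[of "c a" a] by simp
        next
          assume "v = b a" then show ?thesis using 5 EPsym[OF EP4[OF 5(1,2)]] by simp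
        next
          assume "v = c a" then show ?thesis using 5 e irr by simp
        qed
      qed
    qed
  qed
  have d4: "gdist E w (\<sigma> w) \<le> 4" if "w \<in> V" for w
  proof -
    have c1: "gdist E u (\<sigma> u) \<le> 4" if u: "u \<in> insert y A" for u
    proof (cases "G u = x")
      case True
      then have "u \<in> A" using G4 u xA by auto
      then have "walk E [u, y, x]" using Eya Exy by simp
      then show ?thesis using gw[of "[u, y, x]" 4] True s_yA[OF u] by simp
    next
      case False then have g: "G u \<in> A" using s_yA(2)[OF u] by simp
      have "walk E [u, y, G u, b (G u)] \<or> u = y"
        using u Eya Eab(1)[OF g] Eya(1)[OF g] by auto
      moreover have "walk E [y, G u, b (G u)]" using Eab(1)[OF g] Eya(1)[OF g] by simp
      ultimately show ?thesis using gw[of "[u, y, G u, b (G u)]" 4] gw[of "[y, G u, b (G u)]" 4] False s_yA[OF u] by auto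
    qed
    show ?thesis
    proof (rule vcases[OF that])
      assume "w = x" then show ?thesis using s_x gdist_1[of E x y, OF Exy(1) xy] by simp
    next
      assume "w = y" then show ?thesis using c1 by simp
    next
      fix a assume a: "a \<in> A" "w = a \<or> w = b a \<or> long a \<and> w = c a"
      have "walk E [b a, c a]" "walk E [c a, b a, a]" if "long a" using Ebc[OF a(1) that] Eab[OF a(1)] by auto
      moreover have "walk E [b a, a]" using Eab[OF a(1)] by simp
      ultimately show ?thesis using a c1 s_b[OF a(1)] s_c[OF a(1)]
          gw[of "[b a, c a]" 4] gw[of "[c a, b a, a]" 4] gw[of "[b a, a]" 4] by (cases "long a") auto
    qed
  qed
  have xnb: "w = y" if "E x w" for w using Ex that by simp
  show ?thesis
    unfolding good_2_placement_def
  proof (intro exI[of _ \<sigma>] conjI allI impI ballI)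
    show "bij_betw \<sigma> V V" by (rule bij)
    show "\<sigma> v \<noteq> v" if "v \<in> V" for v using fpf that by blast
    show "\<not> E (\<sigma> u) (\<sigma> v)" if "E u v" for u v using EPall[OF that] unfolding EP_def by blast
    show "gdist E (\<sigma> u) (\<sigma> v) \<le> 5" if "E u v" for u v using EPall[OF that] unfolding EP_def by blast
    show "gdist E x (\<sigma> x) = 1" using s_x gdist_1[of E x y, OF Exy(1) xy] by simp
    show "gdist E w (\<sigma> w) \<le> 2" if "w \<in> V" "E x w" for w
    proof -
      have "walk E [y, G y, b (G y)]" using Eya(1)[OF g0(1)] Eab(1)[OF g0(1)] by simp
      then show ?thesis using gw[of "[y, G y, b (G y)]" 2] xnb[OF that(2)] g0 by simp
    qed
    show "gdist E w (\<sigma> w) \<le> 4" if "w \<in> V" "degree V E w = 1" for w using d4 that(1) .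
  qed
qed


lemma br_self: "a \<in> branch E a y"
  unfolding branch_def by (intro CollectI exI[of _ "[a]"]) simp

lemma br_step: assumes "u \<in> branch E a y" "E u w" "{u, w} \<noteq> {a, y}"
  shows "w \<in> branch E a y"
proof -
  obtain xs where xs: "walk (del_edge E a y) xs" "hd xs = a" "last xs = u"
    using assms(1) unfolding branch_def by blast
  have ne: "xs \<noteq> []" using xs(1) by (simp add: walk_def)
  have "walk (del_edge E a y) (xs @ [w])" using walk_snoc[OF ne] xs assms(2,3) by (simp add: del_edge_def)
  moreover have "hd (xs @ [w]) = a" "last (xs @ [w]) = w" using ne xs by simp_all
  ultimately show ?thesis unfolding branch_def by blast
qed

lemma br_prefix: assumes "walk (del_edge E a y) ws" "hd ws = a" "i < length ws"
  shows "ws ! i \<in> branch E a y"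
proof -
  have t: "take (Suc i) ws = take i ws @ [ws ! i]" using assms(3) by (simp add: take_Suc_conv_app_nth)
  have "walk (del_edge E a y) (take (Suc i) ws)" using walk_take[OF assms(1)] by simp
  moreover have "hd (take (Suc i) ws) = a" using assms(2,3) by (cases ws) auto
  moreover have "last (take (Suc i) ws) = ws ! i" using t by simp
  ultimately show ?thesis unfolding branch_def by blast
qed

lemma cover_walk: "walk E xs \<Longrightarrow> hd xs = y \<Longrightarrow> last xs = y \<or> (\<exists>a. E y a \<and> last xs \<in> branch E a y)"
proof (induction xs rule: rev_induct)
  case Nil then show ?case by (simp add: walk_def)
next
  case (snoc w xs)
  show ?case
  proof (cases "xs = []")
    case True then show ?thesis using snoc.prems by simp
  next
    case False
    have w: "walk E xs" "E (last xs) w" using snoc.prems(1) walk_snoc[OF False] by auto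
    have h: "hd xs = y" using snoc.prems(2) False by simp
    from snoc.IH[OF w(1) h] show ?thesis
    proof
      assume "last xs = y"
      then show ?thesis using w(2) br_self[of w E y] False by auto
    next
      assume "\<exists>a. E y a \<and> last xs \<in> branch E a y"
      then obtain a where a: "E y a" "last xs \<in> branch E a y" by blast
      show ?thesis
      proof (cases "{last xs, w} = {a, y}")
        case True
        then have "w = y \<or> w = a" by (auto simp: doubleton_eq_iff)
        then show ?thesis using a br_self[of a E y] by auto
      next
        case False
        then show ?thesis using br_step[OF a(2) w(2)] a(1) by auto
      qed
    qed
  qed
qed



theorem lemma3p10:
  fixes V :: "'a set" and E :: "'a \<Rightarrow> 'a \<Rightarrow> bool" and x y :: 'a
  assumes "is_tree V E"
    and "\<not> is_star V E"
    and "E x y"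
    and "degree V E x = 1"
    and "degree V E y \<ge> 3"
    and "\<And>y'. E y y' \<Longrightarrow> y' \<noteq> x \<Longrightarrow>
           neighbor_F_tree E y' y \<and> card (branch E y' y) \<noteq> 1"
  shows "\<exists>\<sigma>. good_2_placement V E x \<sigma>"
proof -
  have sg: "simple_graph V E" and conn: "connected_graph V E" using assms(1) unfolding is_tree_def by auto
  have fin: "finite V" and inV: "\<And>u v. E u v \<Longrightarrow> u \<in> V" and inV2: "\<And>u v. E u v \<Longrightarrow> v \<in> V"
    and symE: "\<And>u v. E u v \<Longrightarrow> E v u" and irr: "\<And>u. \<not> E u u"
    using sg unfolding simple_graph_def by blast+
  have Exy: "E x y" "E y x" using assms(3) symE[OF assms(3)] by auto
  have xy: "x \<noteq> y" using Exy irr by metis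
  have Sx: "{w \<in> V. E x w} = {y}"
  proof -
    have "card {w \<in> V. E x w} = 1" using assms(4) unfolding degree_def .
    then obtain z where z: "{w \<in> V. E x w} = {z}" by (rule card_1_singletonE)
    have "y \<in> {w \<in> V. E x w}" using Exy inV2 by blast
    then show ?thesis using z by simp
  qed
  have Ex: "E x w \<longleftrightarrow> w = y" for w
  proof
    assume "E x w" then have "w \<in> {w \<in> V. E x w}" using inV2 by blast
    then show "w = y" using Sx by simp
  qed (simp add: Exy)
  define A where "A = {w. E y w \<and> w \<noteq> x}"
  have Ey: "E y w \<longleftrightarrow> w = x \<or> w \<in> A" for w using Exy(2) unfolding A_def by auto
  have AV: "A \<subseteq> V" unfolding A_def using inV2 by blast
  have finA: "finite A" using finite_subset[OF AV fin] .
  have xA: "x \<notin> A" unfolding A_def by simp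
  have yA: "y \<notin> A" unfolding A_def using irr by simp
  have N: "{w \<in> V. E y w} = insert x A" unfolding A_def using inV2 Exy by auto
  have cardN: "card (insert x A) \<ge> 3" using assms(5) N unfolding degree_def by simp
  have Ane: "A \<noteq> {}" using cardN by auto
  define Br where "Br a = branch E a y" for a
  have hyp: "neighbor_F_tree E a y \<and> card (Br a) \<noteq> 1" if "a \<in> A" for a
    using assms(6)[of a] that unfolding A_def Br_def by simp
  have aBr: "a \<in> Br a" for a unfolding Br_def by (rule br_self)
  have yBr: "y \<notin> Br a" if a: "a \<in> A" for a
  proof
    assume yin: "y \<in> Br a"
    obtain vs where vs: "path_seq (Br a) (del_edge E a y) vs" "length vs \<le> 3"
      using hyp[OF a] unfolding neighbor_F_tree_def Br_def by blast
    have sv: "set vs = Br a" using vs(1) unfolding path_seq_def by blast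
    have finB: "finite (Br a)" using sv List.finite_set[of vs] by simp
    have c3: "card (Br a) \<le> 3" using card_length[of vs] sv vs(2) by simp
    have sub: "insert y (insert x A) \<subseteq> Br a"
    proof
      fix w assume w: "w \<in> insert y (insert x A)"
      show "w \<in> Br a"
      proof (cases "w = y \<or> w = a")
        case True then show ?thesis using yin aBr by auto
      next
        case False
        then have "E y w" using w Ey by auto
        moreover have "{y, w} \<noteq> {a, y}" using False by (auto simp: doubleton_eq_iff)
        ultimately show ?thesis using br_step[of y E a y w] yin unfolding Br_def by blast
      qed
    qed
    have "card (insert y (insert x A)) = Suc (card (insert x A))"
      using finA yA xy by simp
    then have "card (insert y (insert x A)) \<ge> 4" using cardN by simp
    moreover have "card (insert y (insert x A)) \<le> card (Br a)" using card_mono[OF finB sub] .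
    ultimately show False using c3 by simp
  qed
  have Ebr: "v \<in> Br a \<or> (u = a \<and> v = y)" if a: "a \<in> A" and u: "u \<in> Br a" and e: "E u v" for a u v
  proof (cases "{u, v} = {a, y}")
    case True
    then have "(u = a \<and> v = y) \<or> (u = y \<and> v = a)" by (auto simp: doubleton_eq_iff)
    then show ?thesis using u yBr[OF a] by auto
  next
    case False then show ?thesis using br_step[of u E a y v] u e unfolding Br_def by blast
  qed
  have xBr: "x \<notin> Br a" if a: "a \<in> A" for a
  proof
    assume "x \<in> Br a"
    from Ebr[OF a this Exy(1)] show False using yBr[OF a] xA a by auto
  qed
  have disj: "a = a'" if a: "a \<in> A" "a' \<in> A" "v \<in> Br a" "v \<in> Br a'" for a a' v
  proof (rule ccontr)
    assume ne: "a \<noteq> a'"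
    have a'n: "a' \<notin> Br a"
    proof
      assume "a' \<in> Br a"
      from Ebr[OF a(1) this] have "y \<in> Br a \<or> a' = a" using Ey a(2) symE[of y a'] by auto
      then show False using yBr[OF a(1)] ne by auto
    qed
    obtain ws where ws: "walk (del_edge E a' y) ws" "hd ws = a'" "last ws = v"
      using a(4) unfolding Br_def branch_def by blast
    have wne: "ws \<noteq> []" using ws(1) by (simp add: walk_def)
    obtain i where i: "Suc i < length ws" "ws ! i \<notin> Br a" "ws ! Suc i \<in> Br a"
      using enter[OF wne, of "Br a"] ws a'n a(3) by auto
    have "del_edge E a' y (ws ! i) (ws ! Suc i)" using ws(1) i(1) unfolding walk_def by blast
    then have "E (ws ! Suc i) (ws ! i)" using symE unfolding del_edge_def by blast
    from Ebr[OF a(1) i(3) this] have "ws ! i = y" using i(2) by auto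
    moreover have "ws ! i \<in> Br a'" using br_prefix[OF ws(1,2), of i] i(1) unfolding Br_def by simp
    ultimately show False using yBr[OF a(2)] by simp
  qed
  have Brx: "v = x" if vb: "v \<in> branch E x y" for v
  proof (rule ccontr)
    assume vx: "v \<noteq> x"
    obtain ws where ws: "walk (del_edge E x y) ws" "hd ws = x" "last ws = v"
      using vb unfolding branch_def by blast
    have wne: "ws \<noteq> []" using ws(1) by (simp add: walk_def)
    obtain i where i: "Suc i < length ws" "ws ! i \<notin> - {x}" "ws ! Suc i \<in> - {x}"
      using enter[OF wne, of "- {x}"] ws vx by auto
    have "del_edge E x y (ws ! i) (ws ! Suc i)" using ws(1) i(1) unfolding walk_def by blast
    then show False using i Ex unfolding del_edge_def by auto
  qed
  have cover: "v = x \<or> v = y \<or> (\<exists>a\<in>A. v \<in> Br a)" if v: "v \<in> V" for v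
  proof -
    obtain xs where xs: "walk E xs" "hd xs = y" "last xs = v"
      using conn v Exy inV2 unfolding connected_graph_def by blast
    from cover_walk[OF xs(1,2)] show ?thesis
    proof
      assume "last xs = y" then show ?thesis using xs by simp
    next
      assume "\<exists>a. E y a \<and> last xs \<in> branch E a y"
      then obtain a where "E y a" "v \<in> branch E a y" using xs by blast
      then show ?thesis using Brx unfolding A_def Br_def by blast
    qed
  qed
  have shape: "\<exists>p. Br a = {a, fst p, snd p} \<and> a \<noteq> fst p \<and> E a (fst p) \<and>
      ((a \<noteq> snd p \<and> fst p \<noteq> snd p \<and> E (fst p) (snd p) \<and> \<not> E a (snd p)) \<or> snd p = fst p)"
    if a: "a \<in> A" for a
  proof -
    obtain vs where vs: "path_seq (Br a) (del_edge E a y) vs" "length vs \<le> 3"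
      "length vs = 3 \<longrightarrow> a = hd vs \<or> a = last vs"
      using hyp[OF a] unfolding neighbor_F_tree_def Br_def by blast
    have sv: "set vs = Br a" and dv: "distinct vs" and vne: "vs \<noteq> []"
      using vs(1) unfolding path_seq_def by blast+
    have ps: "E u v \<longleftrightarrow> (\<exists>i. Suc i < length vs \<and> {vs ! i, vs ! Suc i} = {u, v})"
      if "u \<in> Br a" "v \<in> Br a" for u v
    proof -
      have "del_edge E a y u v \<longleftrightarrow> E u v"
        using that yBr[OF a] unfolding del_edge_def by (auto simp: doubleton_eq_iff)
      then show ?thesis using vs(1) that unfolding path_seq_def by blast
    qed
    have "card (Br a) = length vs" using sv dv distinct_card by metis
    moreover have "length vs \<noteq> 0" using vne by simp
    ultimately have len: "length vs = 2 \<or> length vs = 3" using hyp[OF a] vs(2) by linarith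
    have aset: "a \<in> set vs" using sv aBr by simp
    show ?thesis using len
    proof
      assume l2: "length vs = 2"
      then obtain p q where pq: "vs = [p, q]"
        by (metis One_nat_def Suc_1 length_0_conv length_Suc_conv)
      have sB: "Br a = {p, q}" using sv pq by simp
      have "Suc 0 < length vs \<and> {vs ! 0, vs ! Suc 0} = {p, q}" using pq by simp
      then have Epq: "E p q" using ps[of p q] sB by blast
      have d: "p \<noteq> q" using dv pq by simp
      have "a = p \<or> a = q" using aset pq by simp
      then show ?thesis
      proof
        assume ap: "a = p"
        have "Br a = {a, fst (q, q), snd (q, q)} \<and> a \<noteq> fst (q, q) \<and> E a (fst (q, q)) \<and> ((a \<noteq> snd (q, q) \<and> fst (q, q) \<noteq> snd (q, q) \<and> E (fst (q, q)) (snd (q, q)) \<and> \<not> E a (snd (q, q))) \<or> snd (q, q) = fst (q, q))"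
          using sB ap d Epq by simp
        then show ?thesis by (rule exI)
      next
        assume aq: "a = q"
        have Eqp: "E q p" using symE[OF Epq] .
        have "Br a = {a, fst (p, p), snd (p, p)} \<and> a \<noteq> fst (p, p) \<and> E a (fst (p, p)) \<and> ((a \<noteq> snd (p, p) \<and> fst (p, p) \<noteq> snd (p, p) \<and> E (fst (p, p)) (snd (p, p)) \<and> \<not> E a (snd (p, p))) \<or> snd (p, p) = fst (p, p))"
          using sB aq d Eqp by auto
        then show ?thesis by (rule exI)
      qed
    next
      assume l3: "length vs = 3"
      then obtain p q r where pqr: "vs = [p, q, r]"
        by (auto simp: numeral_3_eq_3 length_Suc_conv)
      have sB: "Br a = {p, q, r}" using sv pqr by simp
      have d: "p \<noteq> q" "q \<noteq> r" "p \<noteq> r" using dv pqr by auto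
      have "Suc 0 < length vs \<and> {vs ! 0, vs ! Suc 0} = {p, q}" using pqr by simp
      then have Epq: "E p q" using ps[of p q] sB by blast
      have "Suc 1 < length vs \<and> {vs ! 1, vs ! Suc 1} = {q, r}" using pqr by simp
      then have Eqr: "E q r" using ps[of q r] sB by blast
      have nEpr: "\<not> E p r"
      proof
        assume "E p r"
        then obtain i where i: "Suc i < length vs" "{vs ! i, vs ! Suc i} = {p, r}" using ps[of p r] sB by blast
        then have "i = 0 \<or> i = 1" using pqr by auto
        then show False
        proof
          assume "i = 0" then have "{p, q} = {p, r}" using i(2) pqr by simp
          then show False using d by (simp add: doubleton_eq_iff)
        next
          assume "i = 1" then have "{q, r} = {p, r}" using i(2) pqr by simp
          then show False using d by (simp add: doubleton_eq_iff)
        qed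
      qed
      have "a = p \<or> a = r" using vs(3) l3 pqr by simp
      then show ?thesis
      proof
        assume ap: "a = p"
        have "Br a = {a, fst (q, r), snd (q, r)} \<and> a \<noteq> fst (q, r) \<and> E a (fst (q, r)) \<and>
          (a \<noteq> snd (q, r) \<and> fst (q, r) \<noteq> snd (q, r) \<and> E (fst (q, r)) (snd (q, r)) \<and> \<not> E a (snd (q, r)) \<or> snd (q, r) = fst (q, r))"
          using sB ap d Epq Eqr nEpr by simp
        then show ?thesis by (rule exI)
      next
        assume ar: "a = r"
        have e: "E r q" "E q p" using symE[OF Epq] symE[OF Eqr] by auto
        have ne: "\<not> E r p" using nEpr symE[of r p] by blast
        have "Br a = {a, fst (q, p), snd (q, p)} \<and> a \<noteq> fst (q, p) \<and> E a (fst (q, p)) \<and>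
          (a \<noteq> snd (q, p) \<and> fst (q, p) \<noteq> snd (q, p) \<and> E (fst (q, p)) (snd (q, p)) \<and> \<not> E a (snd (q, p)) \<or> snd (q, p) = fst (q, p))"
          using sB ar d e ne by auto
        then show ?thesis by (rule exI)
      qed
    qed
  qed
  have "\<forall>a\<in>A. \<exists>p. Br a = {a, fst p, snd p} \<and> a \<noteq> fst p \<and> E a (fst p) \<and>
      ((a \<noteq> snd p \<and> fst p \<noteq> snd p \<and> E (fst p) (snd p) \<and> \<not> E a (snd p)) \<or> snd p = fst p)"
    using shape by (intro ballI)
  from bchoice[OF this] obtain f where f: "\<And>a. a \<in> A \<Longrightarrow> Br a = {a, fst (f a), snd (f a)} \<and> a \<noteq> fst (f a) \<and> E a (fst (f a)) \<and>
      ((a \<noteq> snd (f a) \<and> fst (f a) \<noteq> snd (f a) \<and> E (fst (f a)) (snd (f a)) \<and> \<not> E a (snd (f a))) \<or> snd (f a) = fst (f a))"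
    by blast
  define b where "b a = fst (f a)" for a
  define c where "c a = snd (f a)" for a
  define long where "long a \<longleftrightarrow> c a \<noteq> b a" for a
  show ?thesis
  proof (rule spider_good[where A = A and b = b and c = c and Br = Br and long = long])
    show "\<And>u v. E u v \<Longrightarrow> E v u" by (rule symE)
    show "\<And>u. \<not> E u u" by (rule irr)
    show "\<And>u v. E u v \<Longrightarrow> u \<in> V" by (rule inV)
    show "finite V" by (rule fin)
    show "\<And>w. E x w \<longleftrightarrow> w = y" by (rule Ex)
    show "\<And>w. E y w \<longleftrightarrow> w = x \<or> w \<in> A" by (rule Ey)
    show "A \<noteq> {}" "finite A" "x \<notin> A" "y \<notin> A" "x \<noteq> y" by fact+
    show "\<And>v. v \<in> V \<Longrightarrow> v = x \<or> v = y \<or> (\<exists>a\<in>A. v \<in> Br a)" by (rule cover)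
    show "\<And>a. a \<in> A \<Longrightarrow> Br a = {a, b a, c a}" using f unfolding b_def c_def by blast
    show "\<And>a. a \<in> A \<Longrightarrow> x \<notin> Br a" by (rule xBr)
    show "\<And>a. a \<in> A \<Longrightarrow> y \<notin> Br a" by (rule yBr)
    show "\<And>a a' v. a \<in> A \<Longrightarrow> a' \<in> A \<Longrightarrow> v \<in> Br a \<Longrightarrow> v \<in> Br a' \<Longrightarrow> a = a'" by (rule disj)
    show "\<And>a. a \<in> A \<Longrightarrow> a \<noteq> b a \<and> E a (b a)" using f unfolding b_def by blast
    show "\<And>a. a \<in> A \<Longrightarrow> long a \<Longrightarrow> a \<noteq> c a \<and> b a \<noteq> c a \<and> E (b a) (c a) \<and> \<not> E a (c a)"
      using f unfolding b_def c_def long_def by metis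
    show "\<And>a. a \<in> A \<Longrightarrow> \<not> long a \<Longrightarrow> c a = b a" unfolding long_def by blast
    show "\<And>a u v. a \<in> A \<Longrightarrow> u \<in> Br a \<Longrightarrow> E u v \<Longrightarrow> v \<in> Br a \<or> u = a \<and> v = y" by (rule Ebr)
  qed
qed


end
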